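(* Let $n\in\mathbb N$ and let $f$ be extremal for $M_n$ with $f(0)>0$ and $N$ atoms. Let $t=-\log f(0)>0$ and let $h:\mathbb D\to\mathbb D$ be the holomorphic function with $h(0)=0$ such that $f=\exp\big(t\frac{h-1}{h+1}\big)$. Then $h$ is a finite Blaschke product of degree $N$.
   Context: $\mathbb D$ is the open unit disc; $\mathcal B_0=\{f$ holomorphic on $\mathbb D: 0<|f|\le1\}$; $M_n(f)=\mathrm{Re}\,a_n$ for $f=\sum a_jz^j$; $f\in\mathcal B_0$ is extremal for $M_n$ if $M_n(f)\ge M_n(F)$ for all $F\in\mathcal B_0$. It is known that such $f$ with $f(0)>0$ has the form $f(z)=\exp\big(-\sum_{j=1}^N\lambda_j\frac{1+\alpha_jz}{1-\alpha_jz}\big)$ with $1\le N\le n$, $\lambda_j>0$, distinct $\alpha_j\in\partial\mathbb D$ ($N$ = number of atoms). Explicitly $h=\frac{t+\log f}{t-\log f}$ with $\log f$ the branch real at $0$. *)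

theory Defs
  imports "HOL-Analysis.Analysis"
begin

definition B0 :: "(complex \<Rightarrow> complex) set" where
  "B0 = {f. f holomorphic_on ball 0 1 \<and> (\<forall>z\<in>ball 0 1. 0 < norm (f z) \<and> norm (f z) \<le> 1)}"

definition Mfun :: "nat \<Rightarrow> (complex \<Rightarrow> complex) \<Rightarrow> real" where
  "Mfun n f = Re ((deriv ^^ n) f 0 / of_nat (fact n))"

definition extremal :: "nat \<Rightarrow> (complex \<Rightarrow> complex) \<Rightarrow> bool" where
  "extremal n f \<longleftrightarrow> f \<in> B0 \<and> (\<forall>F\<in>B0. Mfun n F \<le> Mfun n f)"

definition has_atoms :: "(complex \<Rightarrow> complex) \<Rightarrow> nat \<Rightarrow> bool" where
  "has_atoms f N \<longleftrightarrow> (\<exists>(lam :: nat \<Rightarrow> real) (alpha :: nat \<Rightarrow> complex).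
     (\<forall>j<N. lam j > 0 \<and> norm (alpha j) = 1) \<and> inj_on alpha {..<N} \<and>
     (\<forall>z\<in>ball 0 1. f z = exp (- (\<Sum>j<N. of_real (lam j) * (1 + alpha j * z) / (1 - alpha j * z)))))"

definition finite_blaschke :: "(complex \<Rightarrow> complex) \<Rightarrow> nat \<Rightarrow> bool" where
  "finite_blaschke h N \<longleftrightarrow> (\<exists>(c :: complex) (a :: nat \<Rightarrow> complex).
     norm c = 1 \<and> (\<forall>k<N. a k \<in> ball 0 1) \<and>
     (\<forall>z\<in>ball 0 1. h z = c * (\<Prod>k<N. (z - a k) / (1 - cnj (a k) * z))))"

definition h_rep :: "(complex \<Rightarrow> complex) \<Rightarrow> real \<Rightarrow> (complex \<Rightarrow> complex) \<Rightarrow> bool" where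
  "h_rep f t h \<longleftrightarrow> h holomorphic_on ball 0 1 \<and> h ` ball 0 1 \<subseteq> ball 0 1 \<and> h 0 = 0 \<and>
     (\<forall>z\<in>ball 0 1. f z = exp (of_real t * (h z - 1) / (h z + 1)))"

end

theory Submission imports Defs "HOL-Computational_Algebra.Fundamental_Theorem_Algebra" begin

lemma re_cayley: "Re ((1 + w) / (1 - w)) = (1 - (cmod w)^2) / (cmod (1 - w))^2"
proof -
  have a: "(cmod w)^2 = (Re w)^2 + (Im w)^2" by (rule cmod_power2)
  have b: "(cmod (1 - w))^2 = (1 - Re w)^2 + (Im w)^2" by (simp add: cmod_power2)
  show ?thesis unfolding a b by (simp add: Re_divide power2_eq_square algebra_simps)
qed

lemma re_lam: "Re (complex_of_real l * a / b) = l * Re (a / b)"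
proof -
  have "complex_of_real l * a / b = complex_of_real l * (a / b)" by simp
  then show ?thesis by (simp add: Re_divide algebra_simps)
qed

lemma div_div_same: "(q::complex) \<noteq> 0 \<Longrightarrow> (x/q)/(y/q) = x/y"
  by (simp add: divide_divide_eq_left divide_divide_eq_right)

lemma Ints_norm_ge: assumes "(x::complex) \<in> \<int>" "y \<in> \<int>" "x \<noteq> y" shows "1 \<le> norm (y - x)"
proof -
  obtain m where m: "x = of_int m" using assms(1) Ints_cases by blast
  obtain n where n: "y = of_int n" using assms(2) Ints_cases by blast
  have "m \<noteq> n" using assms(3) m n by auto
  then have "1 \<le> \<bar>of_int (n - m) :: real\<bar>" by linarith
  also have "\<dots> = norm (y - x)" unfolding m n by (metis norm_of_int of_int_diff)
  finally show ?thesis .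
qed

lemma norm_diff_lt_sum: assumes "Re s > 0" "t > 0" shows "norm (complex_of_real t - s) < norm (complex_of_real t + s)"
proof -
  have "(norm (complex_of_real t - s))^2 = (t - Re s)^2 + (Im s)^2" by (simp add: cmod_power2)
  also have "\<dots> < (t + Re s)^2 + (Im s)^2" using assms by (simp add: power2_eq_square algebra_simps)
  also have "\<dots> = (norm (complex_of_real t + s))^2" by (simp add: cmod_power2)
  finally show ?thesis by (rule power_less_imp_less_base) simp
qed

lemma keyalg: assumes "(d::complex) \<noteq> 0" "t \<noteq> 0" shows "t * (- 2 * s / d) / (2 * t / d) = - s"
proof -
  have "t * (- 2 * s / d) / (2 * t / d) = (t * (- 2 * s / d) * d) / (2 * t)"
    by (simp add: divide_divide_eq_right)
  also have "t * (- 2 * s / d) * d = - 2 * s * t" using assms(1) by simp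
  finally show ?thesis using assms(2) by simp
qed

lemma prod_mset_nth: "(\<Prod>x\<in>#mset xs. f x) = (\<Prod>k<length xs. f (xs ! k))"
proof -
  have "(\<Prod>x\<in>#mset xs. f x) = prod_list (map f xs)"
    by (simp only: prod_mset_prod_list mset_map[symmetric])
  also have "\<dots> = (\<Prod>k\<in>{0..<length xs}. f (xs ! k))"
    by (simp add: prod.list_conv_set_nth)
  finally show ?thesis by (simp add: atLeast0LessThan)
qed

locale atoms =
  fixes N :: nat and lam :: "nat \<Rightarrow> real" and alpha :: "nat \<Rightarrow> complex"
  assumes lam_pos: "\<And>j. j < N \<Longrightarrow> lam j > 0"
    and alpha_norm: "\<And>j. j < N \<Longrightarrow> norm (alpha j) = 1"
    and inj: "inj_on alpha {..<N}" and N1: "1 \<le> N"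
begin

definition "T = (\<Sum>j<N. lam j)"
definition "Sf z = (\<Sum>j<N. complex_of_real (lam j) * (1 + alpha j * z) / (1 - alpha j * z))"
definition "Qf z = (\<Prod>i<N. 1 - alpha i * z)"
definition "Pf z = (\<Sum>j<N. complex_of_real (lam j) * (1 + alpha j * z) * (\<Prod>i\<in>{..<N}-{j}. 1 - alpha i * z))"
definition "Qp = (\<Prod>i<N. [:1, - alpha i:])"
definition "Pp = (\<Sum>j<N. smult (complex_of_real (lam j)) ([:1, alpha j:] * (\<Prod>i\<in>{..<N}-{j}. [:1, - alpha i:])))"
definition "pp = smult (complex_of_real T) Qp - Pp"
definition "C = (\<Prod>i<N. - alpha i)"

lemma T_pos: "T > 0"
proof -
  have "0 < lam 0" using lam_pos N1 by auto
  also have "\<dots> \<le> T" unfolding T_def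
    using N1 lam_pos by (intro member_le_sum) (auto intro: less_imp_le)
  finally show ?thesis .
qed

lemma poly_Qp: "poly Qp z = Qf z"
  by (simp add: Qp_def Qf_def poly_prod algebra_simps)

lemma poly_Pp: "poly Pp z = Pf z"
  by (simp add: Pp_def Pf_def poly_prod poly_sum algebra_simps)

lemma cnj_alpha: "j < N \<Longrightarrow> cnj (alpha j) * alpha j = 1"
  using alpha_norm[of j] by (metis complex_norm_square mult.commute of_real_1 power_one)

lemma alpha_nz: "j < N \<Longrightarrow> alpha j \<noteq> 0"
  using alpha_norm[of j] by auto

lemma S_eq: assumes "Qf z \<noteq> 0" shows "Sf z = Pf z / Qf z"
proof -
  have "Sf z * Qf z = Pf z"
    unfolding Sf_def Pf_def sum_distrib_right
  proof (rule sum.cong[OF refl])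
    fix j assume j: "j \<in> {..<N}"
    have q: "Qf z = (1 - alpha j * z) * (\<Prod>i\<in>{..<N}-{j}. 1 - alpha i * z)"
      unfolding Qf_def using j by (simp add: prod.remove)
    have "1 - alpha j * z \<noteq> 0" using assms q by auto
    then show "complex_of_real (lam j) * (1 + alpha j * z) / (1 - alpha j * z) * Qf z =
      complex_of_real (lam j) * (1 + alpha j * z) * (\<Prod>i\<in>{..<N}-{j}. 1 - alpha i * z)"
      by (simp add: q)
  qed
  then show ?thesis using assms by (simp add: field_simps)
qed

lemma S0: "Sf 0 = of_real T" by (simp add: Sf_def T_def)
lemma Q0: "Qf 0 = 1" by (simp add: Qf_def)
lemma P0: "Pf 0 = of_real T" by (simp add: Pf_def T_def)

lemma Qf_nz: "norm z < 1 \<Longrightarrow> Qf z \<noteq> 0"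
proof -
  assume z: "norm z < 1"
  have "1 - alpha i * z \<noteq> 0" if "i < N" for i
  proof
    assume "1 - alpha i * z = 0"
    then have "norm (alpha i * z) = 1" by (metis norm_one right_minus_eq)
    with z alpha_norm[OF that] show False by (simp add: norm_mult)
  qed
  then show ?thesis by (simp add: Qf_def)
qed

lemma Re_S_pos: assumes "norm z < 1" shows "Re (Sf z) > 0"
proof -
  have "Re (Sf z) = (\<Sum>j<N. lam j * Re ((1 + alpha j * z) / (1 - alpha j * z)))"
    by (simp add: Sf_def Re_sum re_lam)
  also have "\<dots> > 0"
  proof (rule sum_pos)
    fix j assume j: "j \<in> {..<N}"
    have nw: "norm (alpha j * z) < 1" using assms alpha_norm j by (simp add: norm_mult)
    then have "1 - alpha j * z \<noteq> 0" by auto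
    then have "cmod (1 - alpha j * z) > 0" by simp
    moreover have "(cmod (alpha j * z))^2 < 1" using nw
      by (simp add: abs_square_less_1)
    ultimately have "Re ((1 + alpha j * z) / (1 - alpha j * z)) > 0"
      unfolding re_cayley by (intro divide_pos_pos) auto
    then show "lam j * Re ((1 + alpha j * z) / (1 - alpha j * z)) > 0"
      using lam_pos j by (intro mult_pos_pos) auto
  qed (use N1 in \<open>auto simp: lessThan_empty_iff\<close>)
  finally show ?thesis .
qed

lemma Re_S_nonpos: assumes "norm z \<ge> 1" "\<And>j. j < N \<Longrightarrow> alpha j * z \<noteq> 1" shows "Re (Sf z) \<le> 0"
proof -
  have "Re (Sf z) = (\<Sum>j<N. lam j * Re ((1 + alpha j * z) / (1 - alpha j * z)))"
    by (simp add: Sf_def Re_sum re_lam)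
  also have "\<dots> \<le> 0"
  proof (rule sum_nonpos)
    fix j assume j: "j \<in> {..<N}"
    have nw: "norm (alpha j * z) \<ge> 1" using assms alpha_norm j by (simp add: norm_mult)
    have "(cmod (alpha j * z))^2 \<ge> 1" using nw
      by (simp add: one_le_power)
    then have "Re ((1 + alpha j * z) / (1 - alpha j * z)) \<le> 0"
      unfolding re_cayley by (intro divide_nonpos_nonneg) auto
    then show "lam j * Re ((1 + alpha j * z) / (1 - alpha j * z)) \<le> 0"
      using lam_pos j by (simp add: mult_nonneg_nonpos less_imp_le)
  qed
  finally show ?thesis .
qed

definition "Pj j = [:1, alpha j:] * (\<Prod>i\<in>{..<N}-{j}. [:1, - alpha i:])"

lemma lin_deg: "i < N \<Longrightarrow> degree [:1, - alpha i:] = 1"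
  using alpha_nz[of i] by simp

lemma lin_nz: "[:1, - alpha i:] \<noteq> 0" by simp

lemma Qp_deg: "degree Qp = N"
proof -
  have "degree Qp = (\<Sum>i<N. degree [:1, - alpha i:])"
    unfolding Qp_def by (rule degree_prod_sum_eq) simp
  also have "\<dots> = (\<Sum>i<N. 1)"
    by (intro sum.cong refl lin_deg) auto
  finally show ?thesis by simp
qed

lemma Qp_lead: "lead_coeff Qp = C"
  unfolding Qp_def C_def lead_coeff_prod using alpha_nz
  by (intro prod.cong) (auto simp: lin_deg)

lemma C_remove: "j < N \<Longrightarrow> alpha j * (\<Prod>i\<in>{..<N}-{j}. - alpha i) = - C"
  unfolding C_def by (subst prod.remove[of _ j]) auto

lemma Pj_deg: assumes j: "j < N" shows "degree (Pj j) = N"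
proof -
  have "degree (\<Prod>i\<in>{..<N}-{j}. [:1, - alpha i:]) = (\<Sum>i\<in>{..<N}-{j}. degree [:1, - alpha i:])"
    by (rule degree_prod_sum_eq) simp
  also have "\<dots> = (\<Sum>i\<in>{..<N}-{j}. 1)"
    by (intro sum.cong refl lin_deg) auto
  finally have "degree (\<Prod>i\<in>{..<N}-{j}. [:1, - alpha i:]) = N - 1"
    using j by simp
  moreover have "degree [:1, alpha j:] = 1" using alpha_nz[OF j] by simp
  ultimately show ?thesis unfolding Pj_def using j
    by (subst degree_mult_eq) auto
qed

lemma Pj_lead: assumes j: "j < N" shows "lead_coeff (Pj j) = - C"
proof -
  have "lead_coeff (\<Prod>i\<in>{..<N}-{j}. [:1, - alpha i:]) = (\<Prod>i\<in>{..<N}-{j}. - alpha i)"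
    unfolding lead_coeff_prod using alpha_nz
    by (intro prod.cong) (auto simp: lin_deg)
  moreover have "lead_coeff [:1, alpha j:] = alpha j" using alpha_nz[OF j] by simp
  ultimately show ?thesis unfolding Pj_def lead_coeff_mult using C_remove[OF j] by simp
qed

lemma Pp_Pj: "Pp = (\<Sum>j<N. smult (complex_of_real (lam j)) (Pj j))"
  unfolding Pp_def Pj_def ..

lemma pp_coeff: "coeff pp N = 2 * of_real T * C"
proof -
  have "coeff Pp N = (\<Sum>j<N. of_real (lam j) * (- C))"
    unfolding Pp_Pj coeff_sum coeff_smult
    by (intro sum.cong refl) (metis Pj_deg Pj_lead lessThan_iff)
  moreover have "coeff Qp N = C" using Qp_lead Qp_deg by simp
  ultimately show ?thesis unfolding pp_def
    by (simp add: T_def sum_negf sum_distrib_right[symmetric])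
qed

lemma C_norm: "norm C = 1"
proof -
  have "norm C = (\<Prod>i<N. norm (- alpha i))" unfolding C_def by (rule prod_norm[symmetric])
  also have "\<dots> = 1" by (intro prod.neutral) (simp add: alpha_norm)
  finally show ?thesis .
qed

lemma C_nz: "C \<noteq> 0" using C_norm by auto

lemma pp_deg_le: "degree pp \<le> N"
proof -
  have "degree Pp \<le> N" unfolding Pp_Pj
    by (intro degree_sum_le) (auto intro: order.trans[OF degree_smult_le] simp: Pj_deg)
  then show ?thesis unfolding pp_def
    by (intro degree_diff_le) (auto intro: order.trans[OF degree_smult_le] simp: Qp_deg)
qed

lemma pp_deg: "degree pp = N"
proof -
  have "coeff pp N \<noteq> 0" using pp_coeff C_nz T_pos by simp
  then show ?thesis using pp_deg_le le_degree by (meson le_antisym)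
qed

lemma pp_lead: "lead_coeff pp = 2 * of_real T * C"
  using pp_deg pp_coeff by simp

lemma pp_poly: "poly pp z = of_real T * Qf z - Pf z"
  by (simp add: pp_def poly_Qp poly_Pp)

lemma pp_nz: "pp \<noteq> 0" using pp_deg N1 by auto

lemma root_in_disk: assumes "poly pp x = 0" shows "norm x < 1"
proof (rule ccontr)
  assume "\<not> norm x < 1"
  then have x1: "norm x \<ge> 1" by simp
  show False
  proof (cases "\<exists>k<N. alpha k * x = 1")
    case False
    then have Q: "Qf x \<noteq> 0" unfolding Qf_def by auto
    have "poly pp x = Qf x * (of_real T - Sf x)"
      using Q by (simp add: pp_poly S_eq field_simps)
    moreover have "Re (of_real T - Sf x) > 0"
      using Re_S_nonpos[OF x1] False T_pos by auto
    ultimately have "poly pp x \<noteq> 0" using Q by (metis mult_eq_0_iff zero_complex.simps(1) order.irrefl right_minus_eq)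
    with assms show False by simp
  next
    case True
    then obtain k where k: "k < N" "alpha k * x = 1" by auto
    have Q: "Qf x = 0" unfolding Qf_def using k by (auto intro: prod_zero)
    have others: "(\<Prod>i\<in>{..<N}-{j}. 1 - alpha i * x) = 0" if "j \<in> {..<N} - {k}" for j
      using k that by (intro prod_zero) auto
    have "Pf x = of_real (lam k) * (1 + alpha k * x) * (\<Prod>i\<in>{..<N}-{k}. 1 - alpha i * x)"
    proof -
      have "(\<Sum>j\<in>{..<N}-{k}. of_real (lam j) * (1 + alpha j * x) * (\<Prod>i\<in>{..<N}-{j}. 1 - alpha i * x)) = 0"
        by (intro sum.neutral ballI) (subst others; simp)
      then show ?thesis unfolding Pf_def using k by (subst sum.remove[of _ k]) auto
    qed
    moreover have "(\<Prod>i\<in>{..<N}-{k}. 1 - alpha i * x) \<noteq> 0"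
    proof
      assume "(\<Prod>i\<in>{..<N}-{k}. 1 - alpha i * x) = 0"
      then obtain i where i: "i < N" "i \<noteq> k" "alpha i * x = 1" by auto
      have "x \<noteq> 0" using k by auto
      then have "alpha i = alpha k" using i k by (metis mult_cancel_right)
      with inj i k show False by (auto dest: inj_onD)
    qed
    moreover have "lam k \<noteq> 0" using lam_pos k by (metis less_irrefl)
    ultimately have "Pf x \<noteq> 0" using k by simp
    with assms Q show False by (simp add: pp_poly)
  qed
qed

lemma cnjC: "cnj C = (\<Prod>i<N. - cnj (alpha i))"
  unfolding C_def cnj_prod by simp

lemma refl_prod: assumes "z \<noteq> 0" "A \<subseteq> {..<N}" "finite A"
  shows "z ^ card A * cnj (\<Prod>i\<in>A. 1 - alpha i * (1 / cnj z)) =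
         (\<Prod>i\<in>A. - cnj (alpha i)) * (\<Prod>i\<in>A. 1 - alpha i * z)"
proof -
  have "z ^ card A * cnj (\<Prod>i\<in>A. 1 - alpha i * (1 / cnj z)) =
        (\<Prod>i\<in>A. z * cnj (1 - alpha i * (1 / cnj z)))"
    by (simp add: cnj_prod prod.distrib)
  also have "\<dots> = (\<Prod>i\<in>A. - cnj (alpha i) * (1 - alpha i * z))"
  proof (intro prod.cong refl)
    fix i assume "i \<in> A"
    then have "cnj (alpha i) * alpha i = 1" using assms cnj_alpha by auto
    then show "z * cnj (1 - alpha i * (1 / cnj z)) = - cnj (alpha i) * (1 - alpha i * z)"
      using assms(1) by (simp add: field_simps)
  qed
  also have "\<dots> = (\<Prod>i\<in>A. - cnj (alpha i)) * (\<Prod>i\<in>A. 1 - alpha i * z)"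
    by (rule prod.distrib)
  finally show ?thesis .
qed

lemma refl_Q: assumes "z \<noteq> 0" shows "z ^ N * cnj (Qf (1 / cnj z)) = cnj C * Qf z"
  using refl_prod[OF assms, of "{..<N}"] unfolding Qf_def cnjC by simp

lemma refl_P: assumes z: "z \<noteq> 0" shows "z ^ N * cnj (Pf (1 / cnj z)) = - cnj C * Pf z"
proof -
  have "z ^ N * cnj (Pf (1 / cnj z)) =
    (\<Sum>j<N. z ^ N * cnj (complex_of_real (lam j) * (1 + alpha j * (1 / cnj z)) * (\<Prod>i\<in>{..<N}-{j}. 1 - alpha i * (1 / cnj z))))"
    unfolding Pf_def cnj_sum sum_distrib_left ..
  also have "\<dots> = (\<Sum>j<N. - cnj C * (complex_of_real (lam j) * (1 + alpha j * z) * (\<Prod>i\<in>{..<N}-{j}. 1 - alpha i * z)))"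
  proof (intro sum.cong refl)
    fix j assume "j \<in> {..<N}"
    then have j: "j < N" by simp
    have cN: "card ({..<N}-{j}) = N - 1" using j by simp
    have zN: "z ^ N = z * z ^ card ({..<N}-{j})" using j cN
      by (metis Suc_diff_1 le_less_trans zero_le power_Suc)
    have rp: "z ^ card ({..<N}-{j}) * cnj (\<Prod>i\<in>{..<N}-{j}. 1 - alpha i * (1 / cnj z)) =
         (\<Prod>i\<in>{..<N}-{j}. - cnj (alpha i)) * (\<Prod>i\<in>{..<N}-{j}. 1 - alpha i * z)"
      by (rule refl_prod[OF z]) auto
    have ca: "cnj (alpha j) * alpha j = 1" using cnj_alpha j by simp
    have one: "z * cnj (1 + alpha j * (1 / cnj z)) = cnj (alpha j) * (1 + alpha j * z)"
      using z ca by (simp add: field_simps)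
    have cr: "cnj (alpha j) * (\<Prod>i\<in>{..<N}-{j}. - cnj (alpha i)) = - cnj C"
      using arg_cong[OF C_remove[OF j], of cnj] by (simp add: cnj_prod)
    have "z ^ N * cnj (complex_of_real (lam j) * (1 + alpha j * (1 / cnj z)) * (\<Prod>i\<in>{..<N}-{j}. 1 - alpha i * (1 / cnj z)))
      = complex_of_real (lam j) * (z * cnj (1 + alpha j * (1 / cnj z))) *
        (z ^ card ({..<N}-{j}) * cnj (\<Prod>i\<in>{..<N}-{j}. 1 - alpha i * (1 / cnj z)))"
      unfolding zN by (simp only: complex_cnj_mult complex_cnj_complex_of_real mult_ac)
    also have "\<dots> = complex_of_real (lam j) * (cnj (alpha j) * (1 + alpha j * z)) *
        ((\<Prod>i\<in>{..<N}-{j}. - cnj (alpha i)) * (\<Prod>i\<in>{..<N}-{j}. 1 - alpha i * z))"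
      unfolding one rp ..
    also have "\<dots> = complex_of_real (lam j) * (1 + alpha j * z) *
        ((cnj (alpha j) * (\<Prod>i\<in>{..<N}-{j}. - cnj (alpha i))) * (\<Prod>i\<in>{..<N}-{j}. 1 - alpha i * z))"
      by (simp only: mult_ac)
    also have "\<dots> = - cnj C * (complex_of_real (lam j) * (1 + alpha j * z) * (\<Prod>i\<in>{..<N}-{j}. 1 - alpha i * z))"
      unfolding cr by simp
    finally show "z ^ N * cnj (complex_of_real (lam j) * (1 + alpha j * (1 / cnj z)) * (\<Prod>i\<in>{..<N}-{j}. 1 - alpha i * (1 / cnj z)))
      = - cnj C * (complex_of_real (lam j) * (1 + alpha j * z) * (\<Prod>i\<in>{..<N}-{j}. 1 - alpha i * z))" .
  qed
  also have "\<dots> = - cnj C * Pf z"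
    unfolding Pf_def sum_distrib_left ..
  finally show ?thesis .
qed

lemma refl_pp: assumes z: "z \<noteq> 0"
  shows "z ^ N * cnj (poly pp (1 / cnj z)) = cnj C * (of_real T * Qf z + Pf z)"
proof -
  have "z ^ N * cnj (poly pp (1 / cnj z)) = of_real T * (z ^ N * cnj (Qf (1 / cnj z))) - z ^ N * cnj (Pf (1 / cnj z))"
    unfolding pp_poly by (simp add: algebra_simps)
  also have "\<dots> = cnj C * (of_real T * Qf z + Pf z)"
    unfolding refl_Q[OF z] refl_P[OF z] by (simp add: algebra_simps)
  finally show ?thesis .
qed

lemma factor: "\<exists>a. (\<forall>k<N. norm (a k) < 1) \<and> (\<forall>z. poly pp z = lead_coeff pp * (\<Prod>k<N. z - a k))"
proof -
  obtain xs where xs: "mset xs = proots pp" using ex_mset by blast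
  have len: "length xs = N"
    using arg_cong[OF xs, of size] by (simp add: size_proots_complex pp_deg)
  have "\<forall>k<N. norm (xs ! k) < 1"
  proof (intro allI impI)
    fix k assume "k < N"
    then have "xs ! k \<in> set xs" using len by simp
    then have "xs ! k \<in> set_mset (proots pp)" by (simp flip: xs)
    then have "poly pp (xs ! k) = 0" using pp_nz by simp
    then show "norm (xs ! k) < 1" by (rule root_in_disk)
  qed
  moreover have "\<forall>z. poly pp z = lead_coeff pp * (\<Prod>k<N. z - xs ! k)"
  proof
    fix z
    have "poly pp z = poly (smult (lead_coeff pp) (\<Prod>x\<in>#proots pp. [:-x, 1:])) z"
      by (simp only: complex_poly_decompose_multiset)
    also have "\<dots> = lead_coeff pp * (\<Prod>x\<in>#proots pp. poly [:-x, 1:] z)"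
      by (simp only: poly_smult poly_prod_mset)
    also have "\<dots> = lead_coeff pp * (\<Prod>x\<in>#mset xs. z - x)"
      unfolding xs by simp
    also have "\<dots> = lead_coeff pp * (\<Prod>k<N. z - xs ! k)"
      by (simp add: prod_mset_nth len)
    finally show "poly pp z = lead_coeff pp * (\<Prod>k<N. z - xs ! k)" .
  qed
  ultimately show ?thesis by blast
qed

lemma q_fact: assumes fa: "\<forall>z. poly pp z = lead_coeff pp * (\<Prod>k<N. z - a k)"
  shows "of_real T * Qf z + Pf z = 2 * of_real T * (\<Prod>k<N. 1 - cnj (a k) * z)"
proof (cases "z = 0")
  case True
  then show ?thesis by (simp add: Q0 P0)
next
  case z: False
  have "cnj C * (of_real T * Qf z + Pf z) = z ^ N * cnj (poly pp (1 / cnj z))"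
    using refl_pp[OF z] by simp
  also have "\<dots> = cnj (lead_coeff pp) * (z ^ N * (\<Prod>k<N. cnj (1 / cnj z - a k)))"
    by (simp add: fa cnj_prod)
  also have "z ^ N * (\<Prod>k<N. cnj (1 / cnj z - a k)) = (\<Prod>k<N. z * cnj (1 / cnj z - a k))"
    by (simp add: prod.distrib)
  also have "\<dots> = (\<Prod>k<N. 1 - cnj (a k) * z)"
    using z by (intro prod.cong refl) (simp add: field_simps)
  also have "cnj (lead_coeff pp) = cnj C * (2 * of_real T)"
    unfolding pp_lead by simp
  finally have "cnj C * (of_real T * Qf z + Pf z) = cnj C * (2 * of_real T * (\<Prod>k<N. 1 - cnj (a k) * z))"
    by (simp add: mult_ac)
  moreover have "cnj C \<noteq> 0" using C_nz by simp
  ultimately show ?thesis by simp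
qed

lemma blaschke_h0: "finite_blaschke (\<lambda>z. (of_real T - Sf z) / (of_real T + Sf z)) N"
proof -
  obtain a where a: "\<forall>k<N. norm (a k) < 1" and fa: "\<forall>z. poly pp z = lead_coeff pp * (\<Prod>k<N. z - a k)"
    using factor by blast
  show ?thesis unfolding finite_blaschke_def
  proof (intro exI conjI ballI allI impI)
    show "norm C = 1" by (rule C_norm)
    show "a k \<in> ball 0 1" if "k < N" for k using a that by simp
    fix z :: complex assume "z \<in> ball 0 1"
    then have zn: "norm z < 1" by simp
    have Q: "Qf z \<noteq> 0" using Qf_nz[OF zn] .
    have TS: "of_real T + Sf z \<noteq> 0"
    proof
      assume "of_real T + Sf z = 0"
      then have "Re (of_real T + Sf z) = 0" by simp
      with Re_S_pos[OF zn] T_pos show False by simp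
    qed
    have TQP: "of_real T * Qf z + Pf z \<noteq> 0"
    proof
      assume "of_real T * Qf z + Pf z = 0"
      then have "Qf z * (of_real T + Sf z) = 0" using Q by (simp add: S_eq field_simps)
      with Q TS show False by simp
    qed
    have n: "of_real T - Sf z = (of_real T * Qf z - Pf z) / Qf z"
      using Q by (simp add: S_eq field_simps)
    have d: "of_real T + Sf z = (of_real T * Qf z + Pf z) / Qf z"
      using Q by (simp add: S_eq field_simps)
    have "(of_real T - Sf z) / (of_real T + Sf z) = poly pp z / (of_real T * Qf z + Pf z)"
      unfolding n d pp_poly using Q by (rule div_div_same)
    also have "\<dots> = (2 * of_real T * C * (\<Prod>k<N. z - a k)) / (2 * of_real T * (\<Prod>k<N. 1 - cnj (a k) * z))"
      by (simp only: q_fact[OF fa] fa pp_lead)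
    also have "\<dots> = C * ((\<Prod>k<N. z - a k) / (\<Prod>k<N. 1 - cnj (a k) * z))"
      using T_pos by simp
    also have "\<dots> = C * (\<Prod>k<N. (z - a k) / (1 - cnj (a k) * z))"
      by (simp add: prod_dividef)
    finally show "(of_real T - Sf z) / (of_real T + Sf z) = C * (\<Prod>k<N. (z - a k) / (1 - cnj (a k) * z))" .
  qed
qed

lemma Sf_holo: "Sf holomorphic_on ball 0 1"
proof -
  have "(\<lambda>z. complex_of_real (lam j) * (1 + alpha j * z) / (1 - alpha j * z)) holomorphic_on ball 0 1" if j: "j < N" for j
  proof (intro holomorphic_intros)
    fix z :: complex assume "z \<in> ball 0 1"
    then have "norm (alpha j * z) < 1" using alpha_norm[OF j] by (simp add: norm_mult)
    then show "1 - alpha j * z \<noteq> 0" by auto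
  qed
  then show ?thesis unfolding Sf_def[abs_def] by (intro holomorphic_on_sum) auto
qed

end

theorem lemma5:
  fixes n N :: nat and f :: "complex \<Rightarrow> complex" and t :: real
  assumes "extremal n f"
    and "f 0 \<in> \<real>" and "Re (f 0) > 0"
    and "1 \<le> N" and "N \<le> n"
    and "has_atoms f N"
    and "t = - ln (Re (f 0))"
  shows "(\<exists>h. h_rep f t h) \<and> (\<forall>h. h_rep f t h \<longrightarrow> finite_blaschke h N)"
proof -
  obtain lam alpha where la: "\<forall>j<N. lam j > 0 \<and> norm (alpha j) = 1" and inj: "inj_on alpha {..<N}"
    and fr: "\<forall>z\<in>ball 0 1. f z = exp (- (\<Sum>j<N. of_real (lam j) * (1 + alpha j * z) / (1 - alpha j * z)))"
    using assms(6) unfolding has_atoms_def by blast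
  interpret A: atoms N lam alpha
    using la inj assms(4) by unfold_locales auto
  have fS: "f z = exp (- A.Sf z)" if "z \<in> ball 0 1" for z
    using fr that unfolding A.Sf_def by blast
  have "f 0 = exp (- complex_of_real A.T)" using fS[of 0] A.S0 by simp
  also have "\<dots> = complex_of_real (exp (- A.T))" by (metis exp_of_real of_real_minus)
  finally have "Re (f 0) = exp (- A.T)" by simp
  then have tT: "t = A.T" using assms(7) by simp
  have tpos: "t > 0" using tT A.T_pos by simp
  have TS: "complex_of_real t + A.Sf z \<noteq> 0" if "z \<in> ball 0 1" for z
  proof
    assume "complex_of_real t + A.Sf z = 0"
    then have "Re (complex_of_real t + A.Sf z) = 0" by simp
    with A.Re_S_pos[of z] that tpos show False by simp
  qed
  define h0 where "h0 z = (complex_of_real t - A.Sf z) / (complex_of_real t + A.Sf z)" for z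
  have key: "complex_of_real t * (h0 z - 1) / (h0 z + 1) = - A.Sf z" if z: "z \<in> ball 0 1" for z
  proof -
    have d: "complex_of_real t + A.Sf z \<noteq> 0" using TS[OF z] .
    have p: "h0 z + 1 = 2 * complex_of_real t / (complex_of_real t + A.Sf z)"
      unfolding h0_def using d by (simp add: field_simps)
    have m: "h0 z - 1 = - 2 * A.Sf z / (complex_of_real t + A.Sf z)"
      unfolding h0_def using d by (simp add: field_simps)
    have t0: "complex_of_real t \<noteq> 0" using tpos by simp
    show ?thesis unfolding p m using d t0 by (rule keyalg)
  qed
  have rep0: "h_rep f t h0"
    unfolding h_rep_def
  proof (intro conjI ballI subsetI)
    show "h0 holomorphic_on ball 0 1"
      unfolding h0_def[abs_def] using TS A.Sf_holo by (intro holomorphic_intros) auto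
  next
    fix w assume "w \<in> h0 ` ball 0 1"
    then obtain z where z: "z \<in> ball 0 1" and w: "w = h0 z" by auto
    have "norm (complex_of_real t - A.Sf z) < norm (complex_of_real t + A.Sf z)"
      using A.Re_S_pos[of z] z tpos by (intro norm_diff_lt_sum) auto
    then show "w \<in> ball 0 1" using TS[OF z] unfolding w h0_def
      by (simp add: norm_divide divide_less_eq)
  next
    show "h0 0 = 0" unfolding h0_def using A.S0 tT by simp
  next
    fix z :: complex assume z: "z \<in> ball 0 1"
    show "f z = exp (complex_of_real t * (h0 z - 1) / (h0 z + 1))"
      using key[OF z] fS[OF z] by simp
  qed
  have bl0: "finite_blaschke h0 N"
    using A.blaschke_h0 unfolding h0_def[abs_def] tT .
  have uniq: "finite_blaschke h N" if rep: "h_rep f t h" for h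
  proof -
    have hh: "h holomorphic_on ball 0 1" and hb: "h ` ball 0 1 \<subseteq> ball 0 1" and h00: "h 0 = 0"
      and fh: "\<forall>z\<in>ball 0 1. f z = exp (complex_of_real t * (h z - 1) / (h z + 1))"
      using rep unfolding h_rep_def by auto
    have h1: "h z + 1 \<noteq> 0" if "z \<in> ball 0 1" for z
    proof
      assume "h z + 1 = 0"
      then have "h z = -1" by (metis add.commute add_eq_0_iff)
      with hb that show False by force
    qed
    define g where "g z = (complex_of_real t * (h z - 1) / (h z + 1) + A.Sf z) / (2 * of_real pi * \<i>)" for z
    have gint: "g z \<in> \<int>" if z: "z \<in> ball 0 1" for z
    proof -
      have "exp (complex_of_real t * (h z - 1) / (h z + 1)) = exp (- A.Sf z)"
        using fh fS z by simp
      then obtain m :: int where m: "complex_of_real t * (h z - 1) / (h z + 1) = - A.Sf z + of_int (2 * m) * pi * \<i>"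
        unfolding exp_eq by blast
      have "g z = of_int m" unfolding g_def m by (simp add: field_simps)
      then show ?thesis by simp
    qed
    have gc: "continuous_on (ball 0 1) g"
      unfolding g_def[abs_def]
      using holomorphic_on_imp_continuous_on[OF hh] holomorphic_on_imp_continuous_on[OF A.Sf_holo] h1
      by (intro continuous_intros) auto
    have "g constant_on ball 0 1"
    proof (rule continuous_discrete_range_constant[OF _ gc])
      show "connected (ball (0::complex) 1)" by simp
    next
      fix x :: complex assume x: "x \<in> ball 0 1"
      show "\<exists>e>0. \<forall>y. y \<in> ball 0 1 \<and> g y \<noteq> g x \<longrightarrow> e \<le> norm (g y - g x)"
        using gint x Ints_norm_ge by (intro exI[of _ 1]) auto
    qed
    then obtain c where c: "\<forall>z\<in>ball 0 1. g z = c" unfolding constant_on_def by blast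
    have "g 0 = 0" unfolding g_def using h00 A.S0 tT by simp
    then have g0: "g z = 0" if "z \<in> ball 0 1" for z using c that by force
    have heq: "h z = h0 z" if z: "z \<in> ball 0 1" for z
    proof -
      have e: "complex_of_real t * (h z - 1) / (h z + 1) = - A.Sf z"
        using g0[OF z] unfolding g_def by (simp add: add_eq_0_iff)
      then have "complex_of_real t * (h z - 1) = - A.Sf z * (h z + 1)"
        using h1[OF z] by (simp add: field_simps)
      then have "h z * (complex_of_real t + A.Sf z) = complex_of_real t - A.Sf z"
        by (simp add: algebra_simps)
      then show ?thesis unfolding h0_def using TS[OF z] by (simp add: field_simps)
    qed
    show ?thesis using bl0 heq unfolding finite_blaschke_def by simp
  qed
  show ?thesis using rep0 uniq by blast
qed

end
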